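(* For every integer $n$, \[ p(n) + \sum_{j\geq 1} (-1)^j \Big( p(n-j^2) + p(n-2j^2) \Big) = \begin{cases} 0 & \text{if } n \text{ is odd},\\ qq(n) & \text{if } n \text{ is even}, \end{cases} \] that is, $p(n) - p(n-1) - p(n-2) + p(n-4) + p(n-8) - p(n-9) - p(n-18) + p(n-16) + \cdots$ equals $0$ for odd $n$ and $qq(n)$ for even $n$.
   Context: $p(n)$ denotes the number of partitions of the integer $n$ (with $p(0)=1$ and $p(n)=0$ for $n<0$). $qq(n)$ denotes the number of partitions of $n$ into distinct odd parts (with $qq(n)=0$ for $n<0$). *)

theory Defs
  imports Main "HOL-Library.Multiset"
begin

definition p :: "int \<Rightarrow> int" where
  "p n = (if n < 0 then 0 else
     int (card {M :: nat multiset. (\<forall>x\<in>#M. 0 < x) \<and> sum_mset M = nat n}))"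

definition qq :: "int \<Rightarrow> int" where
  "qq n = (if n < 0 then 0 else
     int (card {S :: nat set. finite S \<and> (\<forall>x\<in>S. odd x) \<and> \<Sum>S = nat n}))"

end

theory Submission
  imports Defs "HOL-Computational_Algebra.Formal_Power_Series"
begin

unbundle fps_syntax



definition qp :: "'a::comm_ring_1 \<Rightarrow> nat \<Rightarrow> 'a" where
  "qp q n = (\<Prod>k<n. 1 - q ^ Suc k)"

lemma qp_0[simp]: "qp q 0 = 1" by (simp add: qp_def)
lemma qp_Suc: "qp q (Suc n) = qp q n * (1 - q ^ Suc n)" by (simp add: qp_def)

fun gb :: "'a::comm_ring_1 \<Rightarrow> nat \<Rightarrow> nat \<Rightarrow> 'a" where
  "gb q 0 b = 1"
| "gb q (Suc a) 0 = 1"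
| "gb q (Suc a) (Suc b) = gb q a (Suc b) + q ^ Suc a * gb q (Suc a) b"

lemma gb_a0[simp]: "gb q a 0 = 1" by (cases a) auto

lemma gb_prod: "gb q a b * qp q a * qp q b = qp q (a + b)"
proof (induction q a b rule: gb.induct)
  case (3 q a b)
  have "gb q (Suc a) (Suc b) * qp q (Suc a) * qp q (Suc b)
      = (gb q a (Suc b) * qp q a * qp q (Suc b)) * (1 - q ^ Suc a)
        + q ^ Suc a * (gb q (Suc a) b * qp q (Suc a) * qp q b) * (1 - q ^ Suc b)"
    by (simp add: qp_Suc algebra_simps)
  also have "\<dots> = qp q (a + Suc b) * (1 - q ^ Suc a) + q ^ Suc a * qp q (Suc a + b) * (1 - q ^ Suc b)"
    using "3.IH" by simp
  also have "\<dots> = qp q (a + Suc b) * (1 - q ^ (Suc a + Suc b))"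
    by (simp add: algebra_simps power_add)
  also have "\<dots> = qp q (Suc a + Suc b)" by (simp add: qp_Suc)
  finally show ?case .
qed simp_all

lemma gb_sym:
  fixes q :: "'a::idom"
  assumes "\<And>k. qp q k \<noteq> 0"
  shows "gb q a b = gb q b a"
proof -
  have "gb q a b * (qp q a * qp q b) = gb q b a * (qp q a * qp q b)"
    using gb_prod[of q a b] gb_prod[of q b a] by (simp add: algebra_simps)
  moreover have "qp q a * qp q b \<noteq> 0" using assms by simp
  ultimately show ?thesis by simp
qed

definition Gi :: "'a::comm_ring_1 \<Rightarrow> int \<Rightarrow> int \<Rightarrow> 'a" where
  "Gi q a b = (if a < 0 \<or> b < 0 then 0 else gb q (nat a) (nat b))"

lemma Gi_neg1: "a < 0 \<Longrightarrow> Gi q a b = 0" by (simp add: Gi_def)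
lemma Gi_neg2: "b < 0 \<Longrightarrow> Gi q a b = 0" by (simp add: Gi_def)

lemma nat_1_plus_int[simp]: "nat (1 + int x) = Suc x" by simp

lemma Gi_R1:
  assumes "a \<noteq> 0 \<or> b \<noteq> 0"
  shows "Gi q a b = Gi q (a - 1) b + q ^ nat a * Gi q a (b - 1)"
proof (cases "a < 0 \<or> b < 0")
  case True thus ?thesis by (auto simp: Gi_def)
next
  case False
  then obtain a' b' where ab: "a = int a'" "b = int b'" by (metis nonneg_int_cases not_less)
  show ?thesis
  proof (cases a')
    case 0
    then obtain b'' where "b' = Suc b''" using assms ab by (cases b') auto
    thus ?thesis using ab 0 by (simp add: Gi_def)
  next
    case (Suc a'')
    show ?thesis
    proof (cases b')
      case 0 thus ?thesis using ab Suc by (simp add: Gi_def)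
    next
      case (Suc b'')
      have "nat (int b' - 1) = b''" "nat (int a' - 1) = a''" using Suc \<open>a' = Suc a''\<close> by auto
      thus ?thesis using ab Suc \<open>a' = Suc a''\<close> by (simp add: Gi_def)
    qed
  qed
qed

lemma Gi_sym:
  fixes q :: "'a::idom"
  assumes "\<And>k. qp q k \<noteq> 0"
  shows "Gi q a b = Gi q b a"
  unfolding Gi_def using gb_sym[OF assms] by auto

lemma Gi_R2:
  fixes q :: "'a::idom"
  assumes "\<And>k. qp q k \<noteq> 0" "a \<noteq> 0 \<or> b \<noteq> 0"
  shows "Gi q a b = Gi q a (b - 1) + q ^ nat b * Gi q (a - 1) b"
proof -
  have "Gi q a b = Gi q b a" by (rule Gi_sym[OF assms(1)])
  also have "\<dots> = Gi q (b - 1) a + q ^ nat b * Gi q b (a - 1)" using assms(2) by (intro Gi_R1) auto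
  also have "Gi q (b - 1) a = Gi q a (b - 1)" by (rule Gi_sym[OF assms(1)])
  also have "Gi q b (a - 1) = Gi q (a - 1) b" by (rule Gi_sym[OF assms(1)])
  finally show ?thesis .
qed


lemma Gi_key:
  fixes Q :: "'a::idom"
  assumes Q: "\<And>k. qp Q k \<noteq> 0" and ab: "a \<ge> -1" "b \<ge> -1" "a + b \<ge> 0"
  shows "Gi Q (a+1) (b+1) = Q ^ nat (a+1) * Gi Q (a+1) (b-1) + (1 + Q ^ nat (a+b+1)) * Gi Q a b
           + Q ^ nat (b+1) * Gi Q (a-1) (b+1)"
proof -
  have r1: "Gi Q (a+1) (b+1) = Gi Q a (b+1) + Q ^ nat (a+1) * Gi Q (a+1) b"
    using Gi_R1[of "a+1" "b+1" Q] ab by simp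
  have r2: "Gi Q (a+1) b = Gi Q (a+1) (b-1) + Q ^ nat b * Gi Q a b"
    using Gi_R2[OF Q, of "a+1" b] ab by simp
  have r3: "Gi Q a (b+1) = Gi Q a b + Q ^ nat (b+1) * Gi Q (a-1) (b+1)"
    using Gi_R2[OF Q, of a "b+1"] ab by simp
  have r4: "Q ^ nat (a+1) * (Q ^ nat b * Gi Q a b) = Q ^ nat (a+b+1) * Gi Q a b"
  proof (cases "a < 0 \<or> b < 0")
    case True thus ?thesis by (auto simp: Gi_def)
  next
    case False
    hence "nat (a+1) + nat b = nat (a+b+1)" by auto
    thus ?thesis by (simp add: power_add[symmetric] mult.assoc[symmetric])
  qed
  show ?thesis unfolding r1 r2 r3 using r4 by (simp add: algebra_simps)
qed

definition cc :: "'a::comm_ring_1 \<Rightarrow> nat \<Rightarrow> int \<Rightarrow> 'a" where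
  "cc q n i = q ^ nat ((i - int n)^2) * Gi (q^2) i (2 * int n - i)"

lemma pow_nat_eq: "x = y \<Longrightarrow> (q::'a::monoid_mult) ^ x = q ^ y" by simp

lemma cc_step:
  fixes q :: "'a::idom"
  assumes Q: "\<And>k. qp (q^2) k \<noteq> 0" and i: "0 \<le> i" "i \<le> 2 * int n + 2"
  shows "cc q (Suc n) i = q ^ (2*n+1) * cc q n i + (1 + q ^ (4*n+2)) * cc q n (i-1)
           + q ^ (2*n+1) * cc q n (i-2)"
proof -
  define a where "a = i - 1"
  define b where "b = 2 * int n + 1 - i"
  define E where "E = nat ((i - int n - 1)^2)"
  have key: "Gi (q^2) (a+1) (b+1) = (q^2) ^ nat (a+1) * Gi (q^2) (a+1) (b-1) + (1 + (q^2) ^ nat (a+b+1)) * Gi (q^2) a b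
           + (q^2) ^ nat (b+1) * Gi (q^2) (a-1) (b+1)"
    by (rule Gi_key[OF Q]) (use i in \<open>auto simp: a_def b_def\<close>)
  have c0: "cc q (Suc n) i = q ^ E * Gi (q^2) (a+1) (b+1)"
    unfolding cc_def E_def a_def b_def by (simp add: algebra_simps)
  have c1: "cc q n i = q ^ nat ((i - int n)^2) * Gi (q^2) (a+1) (b-1)"
    unfolding cc_def a_def b_def by (simp add: algebra_simps)
  have c2: "cc q n (i-1) = q ^ E * Gi (q^2) a b"
    unfolding cc_def E_def a_def b_def by (simp add: algebra_simps)
  have c3: "cc q n (i-2) = q ^ nat ((i - int n - 2)^2) * Gi (q^2) (a-1) (b+1)"
    unfolding cc_def a_def b_def by (simp add: algebra_simps)
  have e1: "q ^ (2*n+1) * q ^ nat ((i - int n)^2) = q ^ E * (q^2) ^ nat (a+1)"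
  proof -
    have s1: "int (nat ((i - int n)^2)) = (i - int n)^2" by simp
    have s2: "int E = (i - int n - 1)^2" unfolding E_def by simp
    have s3: "int (nat (a+1)) = i" using i by (simp add: a_def)
    have "int (2*n+1 + nat ((i - int n)^2)) = int (E + 2 * nat (a+1))"
      unfolding of_nat_add of_nat_mult s1 s2 s3 by (simp add: power2_eq_square algebra_simps)
    hence h: "2*n+1 + nat ((i - int n)^2) = E + 2 * nat (a+1)" by (simp only: of_nat_eq_iff)
    have "q ^ (2*n+1) * q ^ nat ((i - int n)^2) = q ^ (2*n+1 + nat ((i - int n)^2))" by (simp only: power_add)
    also have "\<dots> = q ^ (E + 2 * nat (a+1))" by (simp only: h)
    also have "\<dots> = q ^ E * (q^2) ^ nat (a+1)" by (simp only: power_add power_mult)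
    finally show ?thesis .
  qed
  have e3: "q ^ (2*n+1) * q ^ nat ((i - int n - 2)^2) = q ^ E * (q^2) ^ nat (b+1)"
  proof -
    have s1: "int (nat ((i - int n - 2)^2)) = (i - int n - 2)^2" by simp
    have s2: "int E = (i - int n - 1)^2" unfolding E_def by simp
    have s3: "int (nat (b+1)) = 2 * int n + 2 - i" using i by (simp add: b_def)
    have "int (2*n+1 + nat ((i - int n - 2)^2)) = int (E + 2 * nat (b+1))"
      unfolding of_nat_add of_nat_mult s1 s2 s3 by (simp add: power2_eq_square algebra_simps)
    hence h: "2*n+1 + nat ((i - int n - 2)^2) = E + 2 * nat (b+1)" by (simp only: of_nat_eq_iff)
    have "q ^ (2*n+1) * q ^ nat ((i - int n - 2)^2) = q ^ (2*n+1 + nat ((i - int n - 2)^2))" by (simp only: power_add)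
    also have "\<dots> = q ^ (E + 2 * nat (b+1))" by (simp only: h)
    also have "\<dots> = q ^ E * (q^2) ^ nat (b+1)" by (simp only: power_add power_mult)
    finally show ?thesis .
  qed
  have e2: "(q^2) ^ nat (a+b+1) = q ^ (4*n+2)"
  proof -
    have h: "nat (a+b+1) = 2*n+1" unfolding a_def b_def by simp
    have "(q^2) ^ nat (a+b+1) = (q^2)^(2*n+1)" by (simp only: h)
    also have "\<dots> = q ^ (4*n+2)" by (simp only: power_mult[symmetric]) simp
    finally show ?thesis .
  qed
  have "q ^ (2*n+1) * cc q n i + (1 + q ^ (4*n+2)) * cc q n (i-1) + q ^ (2*n+1) * cc q n (i-2)
      = (q ^ (2*n+1) * q ^ nat ((i - int n)^2)) * Gi (q^2) (a+1) (b-1)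
        + q ^ E * ((1 + q ^ (4*n+2)) * Gi (q^2) a b)
        + (q ^ (2*n+1) * q ^ nat ((i - int n - 2)^2)) * Gi (q^2) (a-1) (b+1)"
    unfolding c1 c2 c3 by (simp add: algebra_simps)
  also have "\<dots> = q ^ E * Gi (q^2) (a+1) (b+1)"
    unfolding e1 e3 key e2 by (simp add: algebra_simps)
  finally show ?thesis using c0 by simp
qed

lemma sum_shift:
  fixes f :: "int \<Rightarrow> 'a::comm_ring_1"
  assumes "f (-1) = 0"
  shows "z * (\<Sum>i<M. z ^ i * f (int i)) = (\<Sum>i<Suc M. z ^ i * f (int i - 1))"
proof -
  have "(\<Sum>i<Suc M. z ^ i * f (int i - 1)) = z ^ 0 * f (int 0 - 1) + (\<Sum>i<M. z ^ Suc i * f (int (Suc i) - 1))"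
    by (rule sum.lessThan_Suc_shift)
  also have "\<dots> = (\<Sum>i<M. z * (z ^ i * f (int i)))" using assms by (simp add: mult.assoc)
  finally show ?thesis by (simp add: sum_distrib_left)
qed

lemma sum_ext:
  fixes f :: "int \<Rightarrow> 'a::comm_ring_1"
  assumes "f (int M) = 0"
  shows "(\<Sum>i<Suc M. z ^ i * f (int i)) = (\<Sum>i<M. z ^ i * f (int i))"
  using assms by simp

lemma cc_out1: "i < 0 \<Longrightarrow> cc q n i = 0" by (simp add: cc_def Gi_def)
lemma cc_out2: "i > 2 * int n \<Longrightarrow> cc q n i = 0" by (simp add: cc_def Gi_def)

lemma jacobi:
  fixes q :: "'a::idom"
  assumes Q: "\<And>k. qp (q^2) k \<noteq> 0"
  shows "(\<Prod>k<n. (1 + z * q^(2*k+1)) * (z + q^(2*k+1))) = (\<Sum>i<2*n+1. z ^ i * cc q n (int i))"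
proof (induction n)
  case 0
  show ?case by (simp add: cc_def Gi_def)
next
  case (Suc n)
  define S where "S = (\<Sum>i<2*n+1. z ^ i * cc q n (int i))"
  define A where "A = q ^ (2*n+1)"
  define B where "B = 1 + q ^ (4*n+2)"
  have f: "(1 + z * q^(2*n+1)) * (z + q^(2*n+1)) = A + B * z + A * z^2"
  proof -
    have cc2: "q^(2*n+1) * q^(2*n+1) = q^(4*n+2)" by (simp add: power_add[symmetric])
    have g: "(1 + z*c)*(z+c) = c + (1 + c*c)*z + c*z^2" for c :: 'a
      by (simp add: algebra_simps power2_eq_square)
    show ?thesis unfolding A_def B_def g cc2 ..
  qed
  have e3: "2*n+3 = Suc (Suc (2*n+1))" by simp
  have s0: "S = (\<Sum>i<2*n+3. z ^ i * cc q n (int i))"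
  proof -
    have "(\<Sum>i<Suc (Suc (2*n+1)). z ^ i * cc q n (int i)) = (\<Sum>i<Suc (2*n+1). z ^ i * cc q n (int i))"
      by (rule sum_ext) (simp add: cc_out2)
    also have "\<dots> = S" unfolding S_def by (rule sum_ext) (simp add: cc_out2)
    finally show ?thesis by (simp only: e3)
  qed
  have s1': "z * S = (\<Sum>i<Suc (2*n+1). z ^ i * cc q n (int i - 1))"
    unfolding S_def by (rule sum_shift) (simp add: cc_out1)
  have s1: "z * S = (\<Sum>i<2*n+3. z ^ i * cc q n (int i - 1))"
  proof -
    have "(\<Sum>i<Suc (Suc (2*n+1)). z ^ i * cc q n (int i - 1)) = z * S" unfolding s1'
      by (rule sum_ext[where f="\<lambda>i. cc q n (i - 1)"]) (simp add: cc_out2)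
    thus ?thesis by (simp only: e3)
  qed
  have s2: "z * (z * S) = (\<Sum>i<2*n+3. z ^ i * cc q n (int i - 2))"
  proof -
    have "z * (z * S) = (\<Sum>i<Suc (Suc (2*n+1)). z ^ i * ((\<lambda>i. cc q n (i - 1)) (int i - 1)))"
      unfolding s1' by (rule sum_shift[where f="\<lambda>i. cc q n (i - 1)"]) (simp add: cc_out1)
    thus ?thesis by (simp only: e3 diff_diff_eq) simp
  qed
  have "(\<Prod>k<Suc n. (1 + z * q^(2*k+1)) * (z + q^(2*k+1))) = S * (A + B * z + A * z^2)"
    using Suc.IH unfolding S_def f[symmetric] by simp
  also have "\<dots> = A * S + B * (z * S) + A * (z * (z * S))" by (simp add: algebra_simps power2_eq_square)
  also have "\<dots> = (\<Sum>i<2*n+3. z ^ i * (A * cc q n (int i) + B * cc q n (int i - 1) + A * cc q n (int i - 2)))"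
    unfolding s2 unfolding s1 unfolding s0 by (simp add: sum_distrib_left sum.distrib algebra_simps)
  also have "\<dots> = (\<Sum>i<2*Suc n+1. z ^ i * cc q (Suc n) (int i))"
  proof -
    have "2*Suc n+1 = 2*n+3" by simp
    moreover have "\<And>i. i \<in> {..<2*n+3} \<Longrightarrow> A * cc q n (int i) + B * cc q n (int i - 1) + A * cc q n (int i - 2) = cc q (Suc n) (int i)"
      unfolding A_def B_def by (rule cc_step[OF Q, symmetric]) auto
    ultimately show ?thesis by (intro sum.cong) auto
  qed
  finally show ?case .
qed



definition PS :: "nat \<Rightarrow> nat \<Rightarrow> nat multiset set" where
  "PS L m = {M. set_mset M \<subseteq> {1..L} \<and> sum_mset M = m}"

lemma size_le_sum_pos: "(\<forall>x\<in>#M. 0 < (x::nat)) \<Longrightarrow> size M \<le> sum_mset M"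
  by (induction M) auto

lemma mem_le_sum: "(x::nat) \<in># M \<Longrightarrow> x \<le> sum_mset M"
  by (induction M) auto

lemma PS_finite: "finite (PS L m)"
proof (rule finite_subset)
  show "PS L m \<subseteq> (\<Union>s\<in>{..m}. multisets_of_size {1..L} s)"
  proof
    fix M assume "M \<in> PS L m"
    hence "set_mset M \<subseteq> {1..L}" "sum_mset M = m" by (auto simp: PS_def)
    moreover have "size M \<le> sum_mset M"
      using \<open>set_mset M \<subseteq> {1..L}\<close> by (intro size_le_sum_pos) auto
    ultimately show "M \<in> (\<Union>s\<in>{..m}. multisets_of_size {1..L} s)"
      by (auto simp: multisets_of_size_def)
  qed
qed auto

lemma PS_0: "PS 0 m = (if m = 0 then {{#}} else {})"
  by (auto simp: PS_def)

lemma PS_Suc_lt: "m < Suc L \<Longrightarrow> PS (Suc L) m = PS L m"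
  apply (auto simp: PS_def subset_iff)
  by (meson mem_le_sum le_trans less_Suc_eq_le)

lemma PS_Suc_ge:
  assumes "Suc L \<le> m"
  shows "PS (Suc L) m = PS L m \<union> (\<lambda>M. M + {#Suc L#}) ` PS (Suc L) (m - Suc L)"
proof
  show "PS (Suc L) m \<subseteq> PS L m \<union> (\<lambda>M. M + {#Suc L#}) ` PS (Suc L) (m - Suc L)"
  proof
    fix M assume M: "M \<in> PS (Suc L) m"
    show "M \<in> PS L m \<union> (\<lambda>M. M + {#Suc L#}) ` PS (Suc L) (m - Suc L)"
    proof (cases "Suc L \<in># M")
      case True
      define M' where "M' = M - {#Suc L#}"
      have e: "M = M' + {#Suc L#}" using True unfolding M'_def by simp
      have "sum_mset M = sum_mset M' + Suc L"
        unfolding e by simp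
      moreover have "set_mset M' \<subseteq> set_mset M"
        unfolding M'_def by (auto dest: in_diffD)
      ultimately have "M' \<in> PS (Suc L) (m - Suc L)" using M unfolding PS_def by auto
      thus ?thesis using e by blast
    next
      case False
      have "set_mset M \<subseteq> {1..L}"
      proof
        fix x assume x: "x \<in># M"
        hence "x \<in> {1..Suc L}" using M unfolding PS_def by auto
        moreover have "x \<noteq> Suc L" using x False by auto
        ultimately show "x \<in> {1..L}" by auto
      qed
      hence "M \<in> PS L m" using M unfolding PS_def by auto
      thus ?thesis by blast
    qed
  qed
next
  show "PS L m \<union> (\<lambda>M. M + {#Suc L#}) ` PS (Suc L) (m - Suc L) \<subseteq> PS (Suc L) m"
    using assms unfolding PS_def by auto
qed

lemma PS_disj: "PS L m \<inter> (\<lambda>M. M + {#Suc L#}) ` PS (Suc L) k = {}"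
proof -
  { fix M assume "M \<in> PS L m" "M \<in> (\<lambda>M. M + {#Suc L#}) ` PS (Suc L) k"
    hence "Suc L \<in># M" "set_mset M \<subseteq> {1..L}" unfolding PS_def by auto
    hence False by auto }
  thus ?thesis by blast
qed

lemma PS_inj: "inj_on (\<lambda>M. M + {#Suc L#}) A"
  by (rule inj_onI) simp

lemma card_PS_Suc:
  "card (PS (Suc L) m) = card (PS L m) + (if Suc L \<le> m then card (PS (Suc L) (m - Suc L)) else 0)"
proof (cases "Suc L \<le> m")
  case True
  have "card ((\<lambda>M. M + {#Suc L#}) ` PS (Suc L) (m - Suc L)) = card (PS (Suc L) (m - Suc L))"
    by (rule card_image[OF PS_inj])
  moreover have "card (PS (Suc L) m) = card (PS L m) + card ((\<lambda>M. M + {#Suc L#}) ` PS (Suc L) (m - Suc L))"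
    unfolding PS_Suc_ge[OF True]
    by (rule card_Un_disjoint[OF PS_finite finite_imageI[OF PS_finite] PS_disj])
  ultimately show ?thesis using True by simp
next
  case False thus ?thesis using PS_Suc_lt[of m L] by simp
qed

definition Fp :: "nat \<Rightarrow> rat fps" where
  "Fp L = Abs_fps (\<lambda>m. of_nat (card (PS L m)))"

lemma Fp_rec: "Fp (Suc L) * (1 - fps_X ^ Suc L) = Fp L"
proof (rule fps_ext)
  fix m
  have "(Fp (Suc L) * (1 - fps_X ^ Suc L)) $ m = Fp (Suc L) $ m - (fps_X ^ Suc L * Fp (Suc L)) $ m"
    by (simp add: algebra_simps)
  also have "\<dots> = Fp L $ m"
    unfolding fps_X_power_mult_nth by (simp add: Fp_def card_PS_Suc)
  finally show "(Fp (Suc L) * (1 - fps_X ^ Suc L)) $ m = Fp L $ m" .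
qed

lemma Fp_qp: "Fp L * qp fps_X L = 1"
proof (induction L)
  case 0
  show ?case by (rule fps_ext) (simp add: Fp_def PS_0)
next
  case (Suc L)
  have "Fp (Suc L) * qp fps_X (Suc L) = (Fp (Suc L) * (1 - fps_X ^ Suc L)) * qp fps_X L"
    by (simp only: qp_Suc mult_ac)
  also have "\<dots> = Fp L * qp fps_X L" by (simp only: Fp_rec)
  also have "\<dots> = 1" by (rule Suc.IH)
  finally show ?case .
qed

lemma qp_X_nth0:
  fixes e :: nat
  assumes "e > 0"
  shows "qp ((fps_X :: 'a::field fps) ^ e) L $ 0 = 1"
  using assms
proof (induction L)
  case (Suc L) thus ?case
    by (simp add: qp_Suc power_mult[symmetric])
qed simp

lemma Fp_eq: "Fp L = inverse (qp fps_X L)"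
proof -
  have h: "qp (fps_X::rat fps) L $ 0 = 1" using qp_X_nth0[of 1 L] by simp
  have "qp fps_X L * inverse (qp fps_X L) = (1::rat fps)" by (rule inverse_mult_eq_1') (simp add: h)
  hence "Fp L = (Fp L * qp fps_X L) * inverse (qp fps_X L)" by (simp only: mult.assoc mult_1_right)
  also have "\<dots> = inverse (qp fps_X L)" by (simp only: Fp_qp mult_1_left)
  finally show ?thesis .
qed

lemma PS_p: "m \<le> L \<Longrightarrow> p (int m) = int (card (PS L m))"
proof -
  assume "m \<le> L"
  have "{M :: nat multiset. (\<forall>x\<in>#M. 0 < x) \<and> sum_mset M = m} = PS L m"
  proof (intro set_eqI iffI)
    fix M assume "M \<in> {M :: nat multiset. (\<forall>x\<in>#M. 0 < x) \<and> sum_mset M = m}"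
    thus "M \<in> PS L m" using \<open>m \<le> L\<close> mem_le_sum[of _ M] unfolding PS_def
      by (fastforce simp: Suc_le_eq)
  next
    fix M assume "M \<in> PS L m"
    thus "M \<in> {M :: nat multiset. (\<forall>x\<in>#M. 0 < x) \<and> sum_mset M = m}" 
      unfolding PS_def by fastforce
  qed
  thus ?thesis by (simp add: p_def)
qed

lemma inv_qp_nth: "m \<le> L \<Longrightarrow> inverse (qp (fps_X::rat fps) L) $ m = of_int (p (int m))"
  unfolding Fp_eq[symmetric] Fp_def by (simp add: PS_p)



definition op :: "rat \<Rightarrow> nat \<Rightarrow> rat fps" where
  "op c n = (\<Prod>k<n. 1 + fps_const c * fps_X ^ (2*k+1))"

lemma sign_parity:
  assumes "finite S" "\<forall>x\<in>S. odd (x::nat)" "c = 1 \<or> c = (-1::rat)"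
  shows "c ^ card S = c ^ (\<Sum>S)"
  using assms
proof (induction S rule: finite_induct)
  case (insert x S)
  have "odd x" using insert by auto
  have "c ^ card (insert x S) = c * c ^ card S" using insert by simp
  also have "\<dots> = c * c ^ (\<Sum>S)" using insert by simp
  also have "\<dots> = c ^ x * c ^ (\<Sum>S)"
    using \<open>odd x\<close> insert.prems(2) by (auto simp: power_minus_odd)
  also have "\<dots> = c ^ (\<Sum>(insert x S))" using insert by (simp add: power_add)
  finally show ?case .
qed simp

lemma prod_expand:
  assumes "finite A"
  shows "(\<Prod>x\<in>A. 1 + fps_const c * fps_X ^ x) =
         (\<Sum>S\<in>Pow A. fps_const (c ^ card S) * fps_X ^ (\<Sum>S) :: rat fps)"
proof -
  have "(\<Prod>x\<in>A. fps_const c * fps_X ^ x + 1) =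
        (\<Sum>S\<in>Pow A. (\<Prod>x\<in>S. fps_const c * fps_X ^ x) * (\<Prod>x\<in>A-S. 1 :: rat fps))"
    by (rule prod_add[OF assms])
  also have "\<dots> = (\<Sum>S\<in>Pow A. fps_const (c ^ card S) * fps_X ^ (\<Sum>S))"
  proof (rule sum.cong[OF refl])
    fix S assume "S \<in> Pow A"
    have "(\<Prod>x\<in>S. fps_const c * fps_X ^ x) = (\<Prod>x\<in>S. fps_const c) * (\<Prod>x\<in>S. (fps_X::rat fps) ^ x)"
      by (rule prod.distrib)
    also have "\<dots> = fps_const (c ^ card S) * fps_X ^ (\<Sum>S)"
      by (simp add: power_sum)
    finally show "(\<Prod>x\<in>S. fps_const c * fps_X ^ x) * (\<Prod>x\<in>A-S. 1 :: rat fps) = fps_const (c ^ card S) * fps_X ^ (\<Sum>S)"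
      by simp
  qed
  finally show ?thesis by (simp add: add.commute)
qed

lemma op_reindex: "op c n = (\<Prod>x\<in>(\<lambda>k. 2*k+1) ` {..<n}. 1 + fps_const c * fps_X ^ x)"
  unfolding op_def by (subst prod.reindex) (auto simp: inj_on_def)

lemma odd_sets_eq:
  assumes "m < 2*n"
  shows "{S \<in> Pow ((\<lambda>k. 2*k+1) ` {..<n}). \<Sum>S = m} = {S :: nat set. finite S \<and> (\<forall>x\<in>S. odd x) \<and> \<Sum>S = m}"
proof (intro set_eqI iffI)
  fix S assume "S \<in> {S \<in> Pow ((\<lambda>k. 2*k+1) ` {..<n}). \<Sum>S = m}"
  thus "S \<in> {S :: nat set. finite S \<and> (\<forall>x\<in>S. odd x) \<and> \<Sum>S = m}"
    by (auto intro: finite_subset)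
next
  fix S assume S: "S \<in> {S :: nat set. finite S \<and> (\<forall>x\<in>S. odd x) \<and> \<Sum>S = m}"
  have "S \<subseteq> (\<lambda>k. 2*k+1) ` {..<n}"
  proof
    fix x assume "x \<in> S"
    have "odd x" using S \<open>x \<in> S\<close> by auto
    have "\<Sum>S = x + \<Sum>(S - {x})" using S \<open>x \<in> S\<close> by (intro sum.remove) auto
    hence "x \<le> \<Sum>S" by simp
    obtain k where "x = 2*k+1" using \<open>odd x\<close> oddE by blast
    moreover have "k < n" using \<open>x \<le> \<Sum>S\<close> S assms \<open>x = 2*k+1\<close> by auto
    ultimately show "x \<in> (\<lambda>k. 2*k+1) ` {..<n}" by auto
  qed
  thus "S \<in> {S \<in> Pow ((\<lambda>k. 2*k+1) ` {..<n}). \<Sum>S = m}" using S by auto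
qed

lemma op_nth:
  assumes "m < 2*n" "c = 1 \<or> c = (-1::rat)"
  shows "op c n $ m = c ^ m * of_int (qq (int m))"
proof -
  define A where "A = (\<lambda>k. 2*k+1) ` {..<n}"
  have fA: "finite A" unfolding A_def by simp
  have "op c n $ m = (\<Sum>S\<in>Pow A. c ^ card S * (if m = \<Sum>S then 1 else 0))"
    unfolding op_reindex prod_expand[OF finite_imageI[OF finite_lessThan]] A_def
    by (simp add: fps_sum_nth)
  also have "\<dots> = (\<Sum>S\<in>Pow A. if \<Sum>S = m then c ^ card S else 0)"
    by (intro sum.cong) auto
  also have "\<dots> = (\<Sum>S\<in>{S\<in>Pow A. \<Sum>S = m}. c ^ card S)"
    by (rule sum.inter_filter[symmetric]) (simp add: fA)
  also have "\<dots> = (\<Sum>S\<in>{S\<in>Pow A. \<Sum>S = m}. c ^ m)"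
  proof (rule sum.cong[OF refl])
    fix S assume S: "S \<in> {S\<in>Pow A. \<Sum>S = m}"
    hence "finite S" "\<forall>x\<in>S. odd x" using fA unfolding A_def by (auto intro: finite_subset)
    thus "c ^ card S = c ^ m" using sign_parity[OF _ _ assms(2)] S by auto
  qed
  also have "\<dots> = of_nat (card {S\<in>Pow A. \<Sum>S = m}) * c ^ m" by simp
  also have "{S\<in>Pow A. \<Sum>S = m} = {S :: nat set. finite S \<and> (\<forall>x\<in>S. odd x) \<and> \<Sum>S = m}"
    unfolding A_def by (rule odd_sets_eq[OF assms(1)])
  finally show ?thesis by (simp add: qq_def)
qed



definition tr :: "nat \<Rightarrow> rat fps \<Rightarrow> rat fps \<Rightarrow> bool" where
  "tr k f g \<longleftrightarrow> fps_X ^ k dvd (f - g)"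

lemma tr_refl[simp]: "tr k f f" by (simp add: tr_def)
lemma tr_sym: "tr k f g \<Longrightarrow> tr k g f"
  unfolding tr_def by (metis dvd_minus_iff minus_diff_eq)
lemma tr_trans: "tr k f g \<Longrightarrow> tr k g h \<Longrightarrow> tr k f h"
  unfolding tr_def using dvd_add[of "fps_X ^ k" "f - g" "g - h"] by simp
lemma tr_add: "tr k f g \<Longrightarrow> tr k f' g' \<Longrightarrow> tr k (f + f') (g + g')"
  unfolding tr_def using dvd_add[of "fps_X ^ k" "f - g" "f' - g'"] by (simp add: algebra_simps)
lemma tr_mult: "tr k f g \<Longrightarrow> tr k f' g' \<Longrightarrow> tr k (f * f') (g * g')"
proof -
  assume a: "tr k f g" "tr k f' g'"
  have "f * f' - g * g' = (f - g) * f' + g * (f' - g')" by (simp add: algebra_simps)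
  thus ?thesis using a unfolding tr_def by (simp add: dvd_add dvd_mult dvd_mult2)
qed
lemma tr_multL: "tr k f g \<Longrightarrow> tr k (h * f) (h * g)" by (rule tr_mult[OF tr_refl])
lemma tr_multR: "tr k f g \<Longrightarrow> tr k (f * h) (g * h)" by (rule tr_mult[OF _ tr_refl])
lemma tr_mono: "tr k f g \<Longrightarrow> k' \<le> k \<Longrightarrow> tr k' f g"
  unfolding tr_def by (meson dvd_trans le_imp_power_dvd)
lemma tr_Xpow: "tr k f g \<Longrightarrow> tr (m + k) (fps_X ^ m * f) (fps_X ^ m * g)"
  unfolding tr_def by (simp add: power_add right_diff_distrib[symmetric] mult_dvd_mono)
lemma tr_nth: "tr k f g \<Longrightarrow> i < k \<Longrightarrow> f $ i = g $ i"
proof -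
  assume "tr k f g" "i < k"
  then obtain h where "f - g = fps_X ^ k * h" unfolding tr_def by (auto elim: dvdE)
  hence "(f - g) $ i = 0" using \<open>i < k\<close> by (simp add: fps_X_power_mult_nth)
  thus ?thesis by simp
qed
lemma tr_sum: "(\<And>i. i \<in> A \<Longrightarrow> tr k (f i) (g i)) \<Longrightarrow> tr k (\<Sum>i\<in>A. f i) (\<Sum>i\<in>A. g i)"
proof (induction A rule: infinite_finite_induct)
  case (insert x F) thus ?case by (simp add: tr_add)
qed auto
lemma tr_inv:
  assumes "f $ 0 \<noteq> 0" "g $ 0 \<noteq> 0" "tr k f g"
  shows "tr k (inverse f) (inverse g)"
proof -
  have "inverse f - inverse g = inverse f * (g - f) * inverse g"
    using inverse_mult_eq_1[OF assms(1)] inverse_mult_eq_1'[OF assms(2)]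
    by (simp add: algebra_simps)
  moreover have "fps_X ^ k dvd (g - f)" using tr_sym[OF assms(3)] unfolding tr_def .
  ultimately show ?thesis unfolding tr_def by simp
qed



lemma qp_nz: "e > 0 \<Longrightarrow> qp ((fps_X :: rat fps) ^ e) k \<noteq> 0"
proof
  assume "e > 0" "qp ((fps_X :: rat fps) ^ e) k = 0"
  thus False using qp_X_nth0[of e k, where 'a=rat] by (metis fps_zero_nth zero_neq_one)
qed

lemma qp_nth0': "e > 0 \<Longrightarrow> qp ((fps_X :: rat fps) ^ e) k $ 0 \<noteq> 0"
  using qp_X_nth0[of e k, where 'a=rat] by simp

lemma qp_tr:
  assumes e: "e > 0" and "m \<le> a"
  shows "tr (Suc m) (qp ((fps_X :: rat fps) ^ e) a) (qp (fps_X ^ e) m)"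
  using assms(2)
proof (induction a)
  case 0 thus ?case by simp
next
  case (Suc a)
  show ?case
  proof (cases "m = Suc a")
    case True thus ?thesis by simp
  next
    case False
    hence "m \<le> a" using Suc.prems by simp
    have "tr (Suc m) (1 - (fps_X ^ e) ^ Suc a) 1"
    proof -
      have "Suc m \<le> e * Suc a" using e \<open>m \<le> a\<close>
        by (metis Suc_le_mono le_trans mult_le_mono1 mult_Suc_right mult_1 le_add1 Suc_leI)
      hence "fps_X ^ Suc m dvd (fps_X :: rat fps) ^ (e * Suc a)" by (rule le_imp_power_dvd)
      moreover have h: "(1 - y) - 1 = - (y::rat fps)" for y by simp
      moreover have "((fps_X :: rat fps) ^ e) ^ Suc a = fps_X ^ (e * Suc a)" by (rule power_mult[symmetric])
      ultimately show ?thesis unfolding tr_def by (simp only: dvd_minus_iff)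
    qed
    hence "tr (Suc m) (qp (fps_X ^ e) a * (1 - (fps_X ^ e) ^ Suc a)) (qp (fps_X ^ e) m * 1)"
      using Suc.IH[OF \<open>m \<le> a\<close>] by (rule tr_mult[rotated])
    thus ?thesis by (simp add: qp_Suc)
  qed
qed

lemma qp_tr2:
  assumes "e > 0" "m \<le> a" "m \<le> b"
  shows "tr (Suc m) (qp ((fps_X :: rat fps) ^ e) a) (qp (fps_X ^ e) b)"
  using qp_tr[OF assms(1,2)] qp_tr[OF assms(1,3)] by (meson tr_sym tr_trans)

lemma Gi_eq:
  assumes "e > 0"
  shows "Gi ((fps_X :: rat fps) ^ e) (int a) (int b)
       = qp (fps_X ^ e) (a + b) * inverse (qp (fps_X ^ e) a) * inverse (qp (fps_X ^ e) b)"
proof -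
  let ?Q = "(fps_X :: rat fps) ^ e"
  have "qp ?Q (a+b) * inverse (qp ?Q a) * inverse (qp ?Q b)
      = gb ?Q a b * (qp ?Q a * inverse (qp ?Q a)) * (qp ?Q b * inverse (qp ?Q b))"
    unfolding gb_prod[symmetric] by (simp add: mult_ac)
  also have "\<dots> = gb ?Q a b"
    using inverse_mult_eq_1'[OF qp_nth0'[OF assms]] by simp
  finally show ?thesis by (simp add: Gi_def)
qed

lemma Gi_tr:
  assumes e: "e > 0" and L: "min a b \<le> L"
  shows "tr (Suc (min a b)) (Gi ((fps_X :: rat fps) ^ e) (int a) (int b)) (inverse (qp (fps_X ^ e) L))"
proof -
  let ?Q = "(fps_X :: rat fps) ^ e"
  let ?m = "min a b"
  have t1: "tr (Suc ?m) (qp ?Q (a+b)) (qp ?Q ?m)" by (rule qp_tr2[OF e]) auto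
  have t2: "tr (Suc ?m) (inverse (qp ?Q a)) (inverse (qp ?Q ?m))"
    by (rule tr_inv[OF qp_nth0'[OF e] qp_nth0'[OF e]]) (rule qp_tr2[OF e], auto)
  have t3: "tr (Suc ?m) (inverse (qp ?Q b)) (inverse (qp ?Q ?m))"
    by (rule tr_inv[OF qp_nth0'[OF e] qp_nth0'[OF e]]) (rule qp_tr2[OF e], auto)
  have "tr (Suc ?m) (Gi ?Q (int a) (int b)) (qp ?Q ?m * inverse (qp ?Q ?m) * inverse (qp ?Q ?m))"
    unfolding Gi_eq[OF e] by (intro tr_mult t1 t2 t3)
  also have "qp ?Q ?m * inverse (qp ?Q ?m) * inverse (qp ?Q ?m) = inverse (qp ?Q ?m)"
    using inverse_mult_eq_1'[OF qp_nth0'[OF e]] by simp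
  finally have "tr (Suc ?m) (Gi ?Q (int a) (int b)) (inverse (qp ?Q ?m))" .
  moreover have "tr (Suc ?m) (inverse (qp ?Q ?m)) (inverse (qp ?Q L))"
    by (rule tr_inv[OF qp_nth0'[OF e] qp_nth0'[OF e]]) (rule qp_tr2[OF e], use L in auto)
  ultimately show ?thesis by (rule tr_trans)
qed



definition th :: "nat \<Rightarrow> nat \<Rightarrow> rat fps" where
  "th d N = (\<Sum>i<2*N+1. (-1)^i * fps_X ^ (d * (nat \<bar>int i - int N\<bar>)^2))"

lemma sq_nat: "nat ((x::int)^2) = (nat \<bar>x\<bar>)^2"
  by (metis abs_ge_zero nat_power_eq power2_abs)

lemma expo_bound:
  assumes "d > 0" "i < 2*N+1"
  shows "N \<le> d * (nat \<bar>int i - int N\<bar>)^2 + min i (2*N - i)"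
proof -
  define t where "t = nat \<bar>int i - int N\<bar>"
  have "t \<le> t^2" by (simp add: power2_eq_square)
  also have "\<dots> \<le> d * t^2" using assms(1) by simp
  finally have "t \<le> d * t^2" .
  moreover have "min i (2*N - i) + t = N" using assms(2) unfolding t_def by auto
  ultimately show ?thesis unfolding t_def by linarith
qed

lemma main_tr:
  assumes d: "d > 0"
  shows "tr (Suc N) ((-1)^N * (\<Prod>k<N. 1 - fps_X ^ (d*(2*k+1)))^2)
                    (th d N * inverse (qp ((fps_X :: rat fps) ^ (2*d)) N))"
proof -
  define q where "q = (fps_X :: rat fps) ^ d"
  have q2: "q^2 = fps_X ^ (2*d)" unfolding q_def by (simp add: power_mult[symmetric] mult.commute)
  have Q: "\<And>k. qp (q^2) k \<noteq> 0" unfolding q2 by (rule qp_nz) (use d in simp)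
  have J: "(\<Prod>k<N. (1 + (-1) * q^(2*k+1)) * ((-1) + q^(2*k+1))) = (\<Sum>i<2*N+1. (-1) ^ i * cc q N (int i))"
    by (rule jacobi[OF Q])
  have qk: "q^(2*k+1) = fps_X ^ (d*(2*k+1))" for k unfolding q_def by (rule power_mult[symmetric])
  have "(\<Prod>k<N. (1 + (-1) * q^(2*k+1)) * ((-1) + q^(2*k+1)))
      = (\<Prod>k<N. (-1) * (1 - fps_X ^ (d*(2*k+1)))^2)"
  proof (intro prod.cong refl)
    fix k
    have g: "(1 + (-1) * y) * ((-1) + y) = (-1) * (1 - y)^2" for y :: "rat fps"
      by (simp add: power2_eq_square algebra_simps)
    show "(1 + (-1) * q^(2*k+1)) * ((-1) + q^(2*k+1)) = (-1) * (1 - fps_X ^ (d*(2*k+1)))^2"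
      unfolding qk by (rule g)
  qed
  also have "\<dots> = (\<Prod>k<N. (-1::rat fps)) * (\<Prod>k<N. (1 - fps_X ^ (d*(2*k+1)))^2)"
    by (rule prod.distrib)
  also have "\<dots> = (-1)^N * (\<Prod>k<N. 1 - fps_X ^ (d*(2*k+1)))^2"
    by (simp only: prod_constant card_lessThan prod_power_distrib)
  finally have L: "(-1)^N * (\<Prod>k<N. 1 - fps_X ^ (d*(2*k+1)))^2 = (\<Sum>i<2*N+1. (-1) ^ i * cc q N (int i))"
    using J by simp
  have "tr (Suc N) (\<Sum>i<2*N+1. (-1) ^ i * cc q N (int i))
                   (\<Sum>i<2*N+1. (-1)^i * fps_X ^ (d * (nat \<bar>int i - int N\<bar>)^2) * inverse (qp ((fps_X :: rat fps) ^ (2*d)) N))"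
  proof (rule tr_sum)
    fix i assume "i \<in> {..<2*N+1}"
    hence i: "i < 2*N+1" by simp
    define m where "m = d * (nat \<bar>int i - int N\<bar>)^2"
    have c: "cc q N (int i) = fps_X ^ m * Gi (fps_X ^ (2*d)) (int i) (int (2*N - i))"
    proof -
      have h1: "2 * int N - int i = int (2*N - i)" using i by simp
      have h2: "q ^ nat ((int i - int N)^2) = fps_X ^ m"
        unfolding q_def m_def sq_nat by (simp only: power_mult)
      show ?thesis unfolding cc_def q2 h1 h2 ..
    qed
    have "tr (Suc (min i (2*N - i))) (Gi (fps_X ^ (2*d)) (int i) (int (2*N - i))) (inverse (qp ((fps_X :: rat fps) ^ (2*d)) N))"
      by (rule Gi_tr) (use d in auto)
    hence "tr (m + Suc (min i (2*N - i))) (fps_X ^ m * Gi (fps_X ^ (2*d)) (int i) (int (2*N - i)))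
              (fps_X ^ m * inverse (qp ((fps_X :: rat fps) ^ (2*d)) N))"
      by (rule tr_Xpow)
    hence "tr (Suc N) (cc q N (int i)) (fps_X ^ m * inverse (qp ((fps_X :: rat fps) ^ (2*d)) N))"
      unfolding c by (rule tr_mono) (use expo_bound[OF d i] in \<open>simp add: m_def\<close>)
    hence "tr (Suc N) ((-1)^i * cc q N (int i)) ((-1)^i * (fps_X ^ m * inverse (qp ((fps_X :: rat fps) ^ (2*d)) N)))"
      by (rule tr_multL)
    thus "tr (Suc N) ((-1)^i * cc q N (int i)) ((-1)^i * fps_X ^ (d * (nat \<bar>int i - int N\<bar>)^2) * inverse (qp ((fps_X :: rat fps) ^ (2*d)) N))"
      by (simp add: m_def mult.assoc)
  qed
  also have "(\<Sum>i<2*N+1. (-1)^i * fps_X ^ (d * (nat \<bar>int i - int N\<bar>)^2) * inverse (qp ((fps_X :: rat fps) ^ (2*d)) N))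
      = th d N * inverse (qp ((fps_X :: rat fps) ^ (2*d)) N)"
    unfolding th_def by (rule sum_distrib_right[symmetric])
  finally show ?thesis unfolding L .
qed



lemma qp_split: "qp q (2*n) = (\<Prod>k<n. 1 - q^(2*k+1)) * qp (q^2) n"
proof (induction n)
  case (Suc n)
  have e: "2 * Suc n = Suc (Suc (2*n))" by simp
  have p2: "(q^2)^(Suc n) = q^(2*n+2)"
  proof -
    have e2: "2 * Suc n = 2*n+2" by simp
    show ?thesis by (simp only: power_mult[symmetric] e2)
  qed
  have "qp q (2 * Suc n) = qp q (2*n) * (1 - q^(2*n+1)) * (1 - q^(2*n+2))"
    unfolding e qp_Suc by (simp only: Suc_eq_plus1 add.assoc one_add_one)
  also have "\<dots> = ((\<Prod>k<n. 1 - q^(2*k+1)) * (1 - q^(2*n+1))) * (qp (q^2) n * (1 - q^(2*n+2)))"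
    unfolding Suc.IH by (simp only: mult_ac)
  also have "\<dots> = (\<Prod>k<Suc n. 1 - q^(2*k+1)) * qp (q^2) (Suc n)"
    by (simp only: prod.lessThan_Suc qp_Suc p2)
  finally show ?case .
qed simp

lemma op_nth0: "op c n $ 0 = 1"
  by (induction n) (simp_all add: op_def)

lemma op_m1: "op (-1) n = (\<Prod>k<n. 1 - fps_X ^ (2*k+1))"
  unfolding op_def by (simp add: fps_const_neg[symmetric])

lemma op_tr:
  assumes "N \<le> a"
  shows "tr (Suc N) (op c a) (op c N)"
  using assms
proof (induction a)
  case 0 thus ?case by simp
next
  case (Suc a)
  show ?case
  proof (cases "N = Suc a")
    case True thus ?thesis by simp
  next
    case False
    hence "N \<le> a" using Suc.prems by simp
    have "tr (Suc N) (1 + fps_const c * fps_X ^ (2*a+1)) 1"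
    proof -
      have "Suc N \<le> 2*a+1" using \<open>N \<le> a\<close> by simp
      hence "fps_X ^ Suc N dvd (fps_X :: rat fps) ^ (2*a+1)" by (rule le_imp_power_dvd)
      hence "fps_X ^ Suc N dvd fps_const c * (fps_X :: rat fps) ^ (2*a+1)" by (rule dvd_mult)
      thus ?thesis unfolding tr_def by simp
    qed
    hence "tr (Suc N) (op c a * (1 + fps_const c * fps_X ^ (2*a+1))) (op c N * 1)"
      using Suc.IH[OF \<open>N \<le> a\<close>] by (rule tr_mult[rotated])
    thus ?thesis by (simp add: op_def)
  qed
qed

lemma neg1_sq: "((-1::rat fps)^N) * (-1)^N = 1"
  by (simp add: power_mult_distrib[symmetric])

lemma inv1: "f $ 0 \<noteq> 0 \<Longrightarrow> (f :: rat fps) * inverse f = 1"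
  by (rule inverse_mult_eq_1')

lemma qpX: "qp (fps_X :: rat fps) n $ 0 \<noteq> 0"
  using qp_nth0'[of 1 n] by simp

lemma partI: "tr (Suc N) ((-1)^N * th 1 N * inverse (qp (fps_X :: rat fps) N)) (op (-1) N)"
proof -
  define Om where "Om = op (-1) N"
  define Q2 where "Q2 = qp ((fps_X :: rat fps) ^ 2) N"
  have Om0: "Om $ 0 \<noteq> 0" unfolding Om_def by (simp add: op_nth0)
  have Q20: "Q2 $ 0 \<noteq> 0" unfolding Q2_def by (rule qp_nth0') simp
  have m: "tr (Suc N) ((-1)^N * Om^2) (th 1 N * inverse Q2)"
    using main_tr[of 1 N] unfolding Om_def op_m1 Q2_def by simp
  have "tr (Suc N) ((-1)^N * Om^2 * Q2) (th 1 N * (inverse Q2 * Q2))"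
    using tr_multR[OF m, of Q2] by (simp add: mult.assoc)
  hence t1: "tr (Suc N) (th 1 N) ((-1)^N * Om^2 * Q2)"
    using inv1[OF Q20] by (simp add: mult.commute tr_sym)
  have t2: "tr (Suc N) (inverse (qp fps_X N)) (inverse Om * inverse Q2)"
  proof -
    have "tr (Suc N) (qp ((fps_X :: rat fps) ^ 1) N) (qp (fps_X ^ 1) (2*N))"
      by (rule qp_tr2) auto
    hence "tr (Suc N) (qp fps_X N) (Om * Q2)"
      unfolding Om_def Q2_def op_m1 by (simp add: qp_split)
    hence "tr (Suc N) (inverse (qp fps_X N)) (inverse (Om * Q2))"
      by (intro tr_inv[OF qpX]) (use Om0 Q20 in simp_all)
    thus ?thesis by (simp add: fps_inverse_mult)
  qed
  have "tr (Suc N) ((-1)^N * th 1 N * inverse (qp fps_X N))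
          ((-1)^N * ((-1)^N * Om^2 * Q2) * (inverse Om * inverse Q2))"
    by (intro tr_mult t1 t2 tr_refl)
  also have "(-1)^N * ((-1)^N * Om^2 * Q2) * (inverse Om * inverse Q2)
           = ((-1)^N * (-1)^N) * Om * (Om * inverse Om) * (Q2 * inverse Q2)"
    by (simp only: mult_ac power2_eq_square)
  also have "\<dots> = Om" by (simp only: neg1_sq inv1[OF Om0] inv1[OF Q20] mult_1_left mult_1_right)
  finally show ?thesis unfolding Om_def .
qed

lemma partII: "tr (Suc N) (th 2 N * inverse (qp (fps_X :: rat fps) N)) ((-1)^N * op 1 N)"
proof -
  define Om where "Om = op (-1) N"
  define Pp where "Pp = op 1 N"
  define R where "R = (\<Prod>k<N. 1 - (fps_X :: rat fps) ^ (2*(2*k+1)))"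
  define Q4 where "Q4 = qp ((fps_X :: rat fps) ^ 4) N"
  have Om0: "Om $ 0 \<noteq> 0" unfolding Om_def by (simp add: op_nth0)
  have RO: "R = Om * Pp"
  proof -
    have "R = (\<Prod>k<N. (1 - fps_X ^ (2*k+1)) * (1 + fps_const 1 * fps_X ^ (2*k+1)))"
      unfolding R_def
    proof (intro prod.cong refl)
      fix k
      have g: "1 - y^2 = (1 - y) * (1 + 1 * y)" for y :: "rat fps" by (simp add: algebra_simps power2_eq_square)
      show "1 - (fps_X :: rat fps) ^ (2*(2*k+1)) = (1 - fps_X ^ (2*k+1)) * (1 + fps_const 1 * fps_X ^ (2*k+1))"
        unfolding mult.commute[of 2 "2*k+1"] power_mult fps_const_1_eq_1 by (rule g)
    qed
    thus ?thesis unfolding Om_def Pp_def op_m1 by (simp add: op_def prod.distrib)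
  qed
  have R0: "R $ 0 \<noteq> 0" unfolding RO Om_def Pp_def by (simp add: op_nth0)
  have Q40: "Q4 $ 0 \<noteq> 0" unfolding Q4_def by (rule qp_nth0') simp
  have m: "tr (Suc N) ((-1)^N * R^2) (th 2 N * inverse Q4)"
    using main_tr[of 2 N] unfolding R_def Q4_def by simp
  have "tr (Suc N) ((-1)^N * R^2 * Q4) (th 2 N * (inverse Q4 * Q4))"
    using tr_multR[OF m, of Q4] by (simp add: mult.assoc)
  hence t1: "tr (Suc N) (th 2 N) ((-1)^N * R^2 * Q4)"
    using inv1[OF Q40] by (simp add: mult.commute tr_sym)
  have t2: "tr (Suc N) (inverse (qp fps_X N)) (inverse Om * inverse R * inverse Q4)"
  proof -
    have a1: "tr (Suc N) (qp ((fps_X :: rat fps) ^ 1) N) (qp (fps_X ^ 1) (2*(2*N)))"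
      by (rule qp_tr2) auto
    have a2: "qp (fps_X :: rat fps) (2*(2*N)) = op (-1) (2*N) * (R * Q4)"
    proof -
      have h1: "((fps_X::rat fps)^2)^(2*k+1) = fps_X^(2*(2*k+1))" for k by (rule power_mult[symmetric])
      have h2: "((fps_X::rat fps)^2)^2 = fps_X^4" by (simp only: power_mult[symmetric]) simp
      have "qp ((fps_X :: rat fps)^2) (2*N) = R * Q4"
        unfolding qp_split R_def Q4_def h1 h2 ..
      thus ?thesis unfolding qp_split[of fps_X "2*N"] op_m1 by simp
    qed
    have a3: "tr (Suc N) (op (-1) (2*N) * (R * Q4)) (Om * (R * Q4))"
      unfolding Om_def by (intro tr_multR op_tr) simp
    have "tr (Suc N) (qp fps_X N) (Om * (R * Q4))"
      using tr_trans[OF a1[unfolded power_one_right a2] a3] .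
    hence "tr (Suc N) (inverse (qp fps_X N)) (inverse (Om * (R * Q4)))"
      by (intro tr_inv[OF qpX]) (use Om0 R0 Q40 in simp_all)
    thus ?thesis by (simp add: fps_inverse_mult mult.assoc)
  qed
  have "tr (Suc N) (th 2 N * inverse (qp fps_X N))
          (((-1)^N * R^2 * Q4) * (inverse Om * inverse R * inverse Q4))"
    by (intro tr_mult t1 t2)
  also have "((-1)^N * R^2 * Q4) * (inverse Om * inverse R * inverse Q4)
           = (-1)^N * Pp * (Om * inverse Om) * (R * inverse R) * (Q4 * inverse Q4)"
    unfolding power2_eq_square by (subst (1) RO) (simp only: mult_ac)
  also have "\<dots> = (-1)^N * Pp" by (simp only: inv1[OF Om0] inv1[OF R0] inv1[OF Q40] mult_1_right)
  finally show ?thesis unfolding Pp_def .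
qed



lemma sym_sum:
  fixes h :: "nat \<Rightarrow> rat"
  shows "(\<Sum>i<2*N+1. (-1)^i * h (nat \<bar>int i - int N\<bar>)) = (-1)^N * (h 0 + 2 * (\<Sum>j\<in>{1..N}. (-1)^j * h j))"
proof (induction N)
  case 0 show ?case by simp
next
  case (Suc N)
  have e: "2 * Suc N + 1 = Suc (Suc (2*N+1))" by simp
  have "(\<Sum>i<2 * Suc N + 1. (-1)^i * h (nat \<bar>int i - int (Suc N)\<bar>))
      = (\<Sum>i<Suc (2*N+1). (-1)^i * h (nat \<bar>int i - int (Suc N)\<bar>)) + (-1)^(2*N+2) * h (Suc N)"
  proof -
    have l: "(-1::rat)^(Suc (2*N+1)) * h (nat \<bar>int (Suc (2*N+1)) - int (Suc N)\<bar>) = (-1)^(2*N+2) * h (Suc N)"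
    proof -
      have "nat \<bar>int (Suc (2*N+1)) - int (Suc N)\<bar> = Suc N" by simp
      moreover have "Suc (2*N+1) = 2*N+2" by simp
      ultimately show ?thesis by simp
    qed
    show ?thesis unfolding e sum.lessThan_Suc[of _ "Suc (2*N+1)"] l ..
  qed
  also have "(\<Sum>i<Suc (2*N+1). (-1)^i * h (nat \<bar>int i - int (Suc N)\<bar>))
      = h (Suc N) + (\<Sum>i<2*N+1. (-1)^(Suc i) * h (nat \<bar>int (Suc i) - int (Suc N)\<bar>))"
  proof -
    have nn: "nat (int N + 1) = Suc N" by simp
    show ?thesis by (subst sum.lessThan_Suc_shift) (simp add: nn)
  qed
  also have "(\<Sum>i<2*N+1. (-1)^(Suc i) * h (nat \<bar>int (Suc i) - int (Suc N)\<bar>))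
      = - (\<Sum>i<2*N+1. (-1)^i * h (nat \<bar>int i - int N\<bar>))"
    by (simp add: sum_negf[symmetric])
  also have "(-1::rat)^(2*N+2) = 1" by (simp add: power_add power_mult)
  finally show ?case unfolding Suc.IH by (simp add: algebra_simps)
qed

lemma neg_pow_nth: "(((-1::rat fps)^N) * f) $ n = (-1)^N * f $ n"
proof -
  have "(-1::rat fps)^N = fps_const ((-1)^N)" by (simp only: fps_const_power[symmetric] fps_const_neg[symmetric] fps_const_1_eq_1)
  thus ?thesis by simp
qed

lemma th_coeff:
  assumes "n \<le> N"
  shows "(th d N * inverse (qp (fps_X :: rat fps) N)) $ n
       = (\<Sum>i<2*N+1. (-1)^i * of_int (p (int n - int d * (int (nat \<bar>int i - int N\<bar>))^2)))"
proof -
  have "(th d N * inverse (qp (fps_X :: rat fps) N)) $ n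
      = (\<Sum>i<2*N+1. (-1)^i * (fps_X ^ (d * (nat \<bar>int i - int N\<bar>)^2) * inverse (qp (fps_X :: rat fps) N)) $ n)"
    unfolding th_def sum_distrib_right fps_sum_nth by (simp add: mult.assoc neg_pow_nth)
  also have "\<dots> = (\<Sum>i<2*N+1. (-1)^i * of_int (p (int n - int d * (int (nat \<bar>int i - int N\<bar>))^2)))"
  proof (intro sum.cong refl)
    fix i
    define t where "t = nat \<bar>int i - int N\<bar>"
    have "(fps_X ^ (d * t^2) * inverse (qp (fps_X :: rat fps) N)) $ n = of_int (p (int n - int d * (int t)^2))"
    proof (cases "n < d * t^2")
      case True
      hence "int n - int d * (int t)^2 < 0"
        by (metis of_nat_less_iff of_nat_mult of_nat_power diff_less_0_iff_less)
      thus ?thesis using True by (simp add: fps_X_power_mult_nth p_def)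
    next
      case False
      hence "int n - int d * (int t)^2 = int (n - d * t^2)" by (simp add: of_nat_diff)
      moreover have "n - d * t^2 \<le> N" using assms by simp
      ultimately show ?thesis using False by (simp add: fps_X_power_mult_nth inv_qp_nth)
    qed
    thus "(-1)^i * (fps_X ^ (d * (nat \<bar>int i - int N\<bar>)^2) * inverse (qp (fps_X :: rat fps) N)) $ n
        = (-1)^i * of_int (p (int n - int d * (int (nat \<bar>int i - int N\<bar>))^2))"
      unfolding t_def by simp
  qed
  finally show ?thesis .
qed



definition hh :: "nat \<Rightarrow> nat \<Rightarrow> nat \<Rightarrow> rat" where
  "hh m d t = of_int (p (int m - int d * (int t)^2))"

lemma th_sum:
  assumes d: "d > 0"
  shows "(th d (Suc m) * inverse (qp (fps_X :: rat fps) (Suc m))) $ m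
       = (-1)^(Suc m) * (hh m d 0 + 2 * (\<Sum>j\<in>{1..m}. (-1)^j * hh m d j))"
proof -
  have "(th d (Suc m) * inverse (qp (fps_X :: rat fps) (Suc m))) $ m
      = (\<Sum>i<2*Suc m+1. (-1)^i * hh m d (nat \<bar>int i - int (Suc m)\<bar>))"
    unfolding th_coeff[of m "Suc m" d, OF le_SucI[OF order_refl]] hh_def ..
  also have "\<dots> = (-1)^(Suc m) * (hh m d 0 + 2 * (\<Sum>j\<in>{1..Suc m}. (-1)^j * hh m d j))"
    by (rule sym_sum)
  also have "hh m d (Suc m) = 0"
  proof -
    have "int m < int d * (int (Suc m))^2"
    proof -
      have "int m < int (Suc m)" by simp
      also have "\<dots> \<le> int (Suc m) * int (Suc m)" by simp
      also have "\<dots> \<le> int d * (int (Suc m) * int (Suc m))" using d by simp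
      finally show ?thesis by (simp add: power2_eq_square)
    qed
    thus ?thesis unfolding hh_def by (simp add: p_def)
  qed
  hence "(\<Sum>j\<in>{1..Suc m}. (-1)^j * hh m d j) = (\<Sum>j\<in>{1..m}. (-1)^j * hh m d j)"
    by (simp add: sum.cl_ivl_Suc)
  finally show ?thesis .
qed

lemma partA: "hh m 1 0 + 2 * (\<Sum>j\<in>{1..m}. (-1)^j * hh m 1 j) = (-1)^m * of_int (qq (int m))"
proof -
  define A where "A = hh m 1 0 + 2 * (\<Sum>j\<in>{1..m}. (-1)^j * hh m 1 j)"
  have "((-1)^(Suc m) * th 1 (Suc m) * inverse (qp (fps_X :: rat fps) (Suc m))) $ m = op (-1) (Suc m) $ m"
    by (rule tr_nth[OF partI]) simp
  also have "\<dots> = (-1)^m * of_int (qq (int m))" by (rule op_nth) auto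
  also have "((-1)^(Suc m) * th 1 (Suc m) * inverse (qp (fps_X :: rat fps) (Suc m))) $ m
      = (-1)^(Suc m) * ((-1)^(Suc m) * A)"
    unfolding mult.assoc neg_pow_nth th_sum[of 1 m, OF zero_less_one] A_def ..
  also have "(-1::rat)^(Suc m) * ((-1)^(Suc m) * A) = A"
    by (simp add: mult.assoc[symmetric] power_mult_distrib[symmetric])
  finally show ?thesis unfolding A_def .
qed

lemma two_pos: "(0::nat) < 2" by simp

lemma partB: "hh m 2 0 + 2 * (\<Sum>j\<in>{1..m}. (-1)^j * hh m 2 j) = of_int (qq (int m))"
proof -
  define B where "B = hh m 2 0 + 2 * (\<Sum>j\<in>{1..m}. (-1)^j * hh m 2 j)"
  have "(th 2 (Suc m) * inverse (qp (fps_X :: rat fps) (Suc m))) $ m = ((-1)^(Suc m) * op 1 (Suc m)) $ m"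
    by (rule tr_nth[OF partII]) simp
  also have "\<dots> = (-1)^(Suc m) * of_int (qq (int m))"
    unfolding neg_pow_nth by (subst op_nth) auto
  finally have "(-1)^(Suc m) * B = (-1)^(Suc m) * of_int (qq (int m))"
    unfolding th_sum[of 2 m, OF two_pos] B_def .
  thus ?thesis unfolding B_def by simp
qed


theorem theorem1:
  fixes n :: int
  shows "p n + (\<Sum>j\<in>{1..nat n}. (-1) ^ j * (p (n - int j ^ 2) + p (n - 2 * int j ^ 2)))
         = (if odd n then 0 else qq n)"
proof (cases "n < 0")
  case True
  thus ?thesis by (simp add: p_def qq_def)
next
  case False
  then obtain m where n: "n = int m" by (metis nonneg_int_cases not_less)
  define LHS where "LHS = p n + (\<Sum>j\<in>{1..nat n}. (-1) ^ j * (p (n - int j ^ 2) + p (n - 2 * int j ^ 2)))"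
  have L: "(of_int LHS :: rat) = hh m 1 0 + (\<Sum>j\<in>{1..m}. (-1)^j * hh m 1 j) + (\<Sum>j\<in>{1..m}. (-1)^j * hh m 2 j)"
    unfolding LHS_def hh_def n by (simp add: sum.distrib algebra_simps)
  have "2 * (of_int LHS :: rat) = (hh m 1 0 + 2 * (\<Sum>j\<in>{1..m}. (-1)^j * hh m 1 j))
                                 + (hh m 2 0 + 2 * (\<Sum>j\<in>{1..m}. (-1)^j * hh m 2 j))"
    unfolding L by (simp add: hh_def algebra_simps)
  also have "\<dots> = ((-1)^m + 1) * of_int (qq (int m))" unfolding partA partB by (simp add: algebra_simps)
  finally have E: "2 * (of_int LHS :: rat) = ((-1)^m + 1) * of_int (qq (int m))" .
  show ?thesis
  proof (cases "odd m")
    case True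
    hence "(of_int LHS :: rat) = 0" using E by simp
    hence "LHS = 0" by (simp only: of_int_eq_0_iff)
    thus ?thesis using True unfolding LHS_def n by simp
  next
    case False
    hence "(of_int LHS :: rat) = of_int (qq (int m))" using E by simp
    hence "LHS = qq (int m)" by (simp only: of_int_eq_iff)
    thus ?thesis using False unfolding LHS_def n by simp
  qed
qed

end
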